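(* Let $n\ge1$, $N=\{1,\dots,n\}$, $A=[0,1]$. Any OWA mechanism that satisfies proportionality (P) also satisfies proportional fairness (PF), and therefore unanimous fair share (UFS).
   Context: A mechanism is a map $f:A^n\to A$ from profiles $x=(x_i)_{i\in N}$ of reported locations to a facility location. An OWA mechanism has weights $w_1,\dots,w_n\in[0,1]$ with $\sum_j w_j=1$ and returns $f(x)=\sum_{j=1}^n w_j x_{\pi(j)}$, where $\pi$ is a permutation of $N$ with $x_{\pi(1)}\le\dots\le x_{\pi(n)}$. P: for every $x\in\{0,1\}^n$, $f(x)=\#\{i\in N: x_i=1\}/n$. PF: for every $x\in A^n$, every nonempty $S\subseteq N$ and every $i\in S$, $|x_i-f(x)|\le 1-\frac{|S|}{n}+r_S$ where $r_S=\max_{j\in S}x_j-\min_{j\in S}x_j$. UFS: for every $x\in A^n$, every nonempty $S\subseteq N$ such that all $x_j$, $j\in S$, are equal, and every $i\in S$, $|x_i-f(x)|\le 1-\frac{|S|}{n}$. *)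

theory Defs
  imports Complex_Main
begin

text \<open>Agents are indexed by 0,...,n-1; a profile is a list of length n of reals.
  A = [0,1].\<close>

definition profiles :: "nat \<Rightarrow> real set \<Rightarrow> real list set" where
  "profiles n A = {x. length x = n \<and> set x \<subseteq> A}"

definition owa_weights :: "nat \<Rightarrow> (nat \<Rightarrow> real) \<Rightarrow> bool" where
  "owa_weights n w \<longleftrightarrow> (\<forall>j<n. 0 \<le> w j \<and> w j \<le> 1) \<and> (\<Sum>j<n. w j) = 1"

definition owa :: "nat \<Rightarrow> (nat \<Rightarrow> real) \<Rightarrow> real list \<Rightarrow> real" where
  "owa n w x = (\<Sum>j<n. w j * sort x ! j)"

definition prop_P :: "nat \<Rightarrow> (real list \<Rightarrow> real) \<Rightarrow> bool" where
  "prop_P n f \<longleftrightarrow> (\<forall>x \<in> profiles n {0,1}.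
      f x = real (card {i. i < n \<and> x ! i = 1}) / real n)"

definition range_of :: "real list \<Rightarrow> nat set \<Rightarrow> real" where
  "range_of x S = Max ((!) x ` S) - Min ((!) x ` S)"

definition prop_PF :: "nat \<Rightarrow> (real list \<Rightarrow> real) \<Rightarrow> bool" where
  "prop_PF n f \<longleftrightarrow> (\<forall>x \<in> profiles n {0..1}. \<forall>S. S \<subseteq> {..<n} \<and> S \<noteq> {} \<longrightarrow>
      (\<forall>i\<in>S. \<bar>x ! i - f x\<bar> \<le> 1 - real (card S) / real n + range_of x S))"

definition prop_UFS :: "nat \<Rightarrow> (real list \<Rightarrow> real) \<Rightarrow> bool" where
  "prop_UFS n f \<longleftrightarrow> (\<forall>x \<in> profiles n {0..1}. \<forall>S. S \<subseteq> {..<n} \<and> S \<noteq> {} \<and>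
      (\<forall>j\<in>S. \<forall>k\<in>S. x ! j = x ! k) \<longrightarrow>
      (\<forall>i\<in>S. \<bar>x ! i - f x\<bar> \<le> 1 - real (card S) / real n))"

end

theory Submission
  imports Defs "HOL-Library.Multiset"
begin

lemma weights_uniform:
  fixes n :: nat and w :: "nat \<Rightarrow> real"
  assumes n: "n \<ge> 1" and P: "prop_P n (owa n w)"
  shows "\<forall>j<n. w j = 1 / real n"
proof -
  have S: "(\<Sum>j\<in>{n-k..<n}. w j) = real k / real n" if k: "k \<le> n" for k
  proof -
    define x where "x = replicate (n-k) (0::real) @ replicate k 1"
    have len: "length x = n" using k by (simp add: x_def)
    have xin: "x \<in> profiles n {0,1}" using len by (auto simp: profiles_def x_def)
    have sx: "sort x = x" unfolding x_def
      by (rule sorted_sort_id) (auto simp: sorted_append)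
    have nth: "x ! j = (if j < n - k then 0 else 1)" if "j < n" for j
      using that k by (auto simp: x_def nth_append)
    have "owa n w x = (\<Sum>j<n. w j * (if j < n - k then 0 else 1))"
      unfolding owa_def sx by (rule sum.cong) (auto simp: nth)
    also have "\<dots> = (\<Sum>j\<in>{n-k..<n}. w j * (if j < n - k then 0 else 1))"
      by (rule sum.mono_neutral_right) auto
    also have "\<dots> = (\<Sum>j\<in>{n-k..<n}. w j)"
      by (rule sum.cong) auto
    finally have o: "owa n w x = (\<Sum>j\<in>{n-k..<n}. w j)" .
    have "{i. i < n \<and> x ! i = 1} = {n-k..<n}" using nth by (auto split: if_splits)
    hence "card {i. i < n \<and> x ! i = 1} = k" using k by simp
    with P xin o show ?thesis unfolding prop_P_def by auto
  qed
  show ?thesis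
  proof (intro allI impI)
    fix j assume j: "j < n"
    have a: "(\<Sum>j\<in>{n-(n-j)..<n}. w j) = real (n-j) / real n" using S[of "n-j"] by simp
    have b: "(\<Sum>j\<in>{n-(n-j-1)..<n}. w j) = real (n-j-1) / real n" using S[of "n-j-1"] by simp
    have e1: "n-(n-j) = j" and e2: "n-(n-j-1) = Suc j" using j by auto
    have "{j..<n} = insert j {Suc j..<n}" using j by auto
    hence "(\<Sum>j\<in>{j..<n}. w j) = w j + (\<Sum>j\<in>{Suc j..<n}. w j)" by simp
    with a b e1 e2 have "w j = real (n-j) / real n - real (n-j-1) / real n" by simp
    also have "\<dots> = 1 / real n" using j by (simp add: diff_divide_distrib[symmetric] of_nat_diff)
    finally show "w j = 1 / real n" .
  qed
qed

lemma owa_mean: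
  assumes u: "\<forall>j<n. w j = 1 / real n" and len: "length x = n"
  shows "owa n w x = (\<Sum>i<n. x ! i) / real n"
proof -
  have "owa n w x = (\<Sum>j<n. sort x ! j) / real n"
    unfolding owa_def using u by (simp add: sum_divide_distrib)
  also have "(\<Sum>j<n. sort x ! j) = sum_list (sort x)"
    using len by (simp add: sum_list_sum_nth lessThan_atLeast0)
  also have "\<dots> = sum_list x"
    by (metis mset_sort sum_mset_sum_list)
  also have "\<dots> = (\<Sum>i<n. x ! i)"
    using len by (simp add: sum_list_sum_nth lessThan_atLeast0)
  finally show ?thesis .
qed

lemma mean_PF:
  fixes x :: "real list"
  assumes n: "n \<ge> 1" and len: "length x = n" and x01: "set x \<subseteq> {0..1}"
    and S: "S \<subseteq> {..<n}" "S \<noteq> {}" and i: "i \<in> S"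
  shows "\<bar>x ! i - (\<Sum>j<n. x ! j) / real n\<bar> \<le> 1 - real (card S) / real n + range_of x S"
proof -
  have fin: "finite S" using S finite_subset by blast
  define r where "r = range_of x S"
  have inr: "\<bar>x ! i - x ! j\<bar> \<le> r" if "j \<in> S" for j
  proof -
    have "x ! i \<le> Max ((!) x ` S)" "x ! j \<le> Max ((!) x ` S)"
      "Min ((!) x ` S) \<le> x ! i" "Min ((!) x ` S) \<le> x ! j"
      using fin i that by auto
    thus ?thesis unfolding r_def range_of_def by linarith
  qed
  have r0: "r \<ge> 0" using inr[OF i] by linarith
  have in01: "x ! j \<in> {0..1}" if "j < n" for j
    using x01 len that nth_mem by blast
  have out: "\<bar>x ! i - x ! j\<bar> \<le> 1" if "j < n" for j
  proof -
    have "i < n" using i S by auto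
    thus ?thesis using in01[OF that] in01[of i] by auto
  qed
  have np: "real n > 0" using n by simp
  have "x ! i - (\<Sum>j<n. x ! j) / real n = (\<Sum>j<n. (x ! i - x ! j)) / real n"
    using np by (simp add: sum_subtractf field_simps)
  hence "\<bar>x ! i - (\<Sum>j<n. x ! j) / real n\<bar> = \<bar>\<Sum>j<n. (x ! i - x ! j)\<bar> / real n"
    by simp
  also have "\<bar>\<Sum>j<n. (x ! i - x ! j)\<bar> \<le> (\<Sum>j<n. \<bar>x ! i - x ! j\<bar>)"
    by (rule sum_abs)
  also have "(\<Sum>j<n. \<bar>x ! i - x ! j\<bar>) = (\<Sum>j\<in>S. \<bar>x ! i - x ! j\<bar>) + (\<Sum>j\<in>{..<n}-S. \<bar>x ! i - x ! j\<bar>)"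
    using S(1) by (metis finite_lessThan sum.subset_diff add.commute)
  also have "\<dots> \<le> (\<Sum>j\<in>S. r) + (\<Sum>j\<in>{..<n}-S. 1)"
    by (intro add_mono sum_mono) (auto intro: inr out)
  also have "\<dots> = real (card S) * r + (real n - real (card S))"
  proof -
    have "card S \<le> n" using S(1) by (metis card_lessThan card_mono finite_lessThan)
    thus ?thesis using S(1) fin by (simp add: card_Diff_subset of_nat_diff)
  qed
  finally have "\<bar>x ! i - (\<Sum>j<n. x ! j) / real n\<bar> \<le> (real (card S) * r + (real n - real (card S))) / real n"
    using np by (simp add: divide_right_mono)
  also have "\<dots> = real (card S) / real n * r + 1 - real (card S) / real n"
    using np by (simp add: field_simps)
  also have "\<dots> \<le> r + 1 - real (card S) / real n"
  proof -
    have "card S \<le> n" using S(1) by (metis card_lessThan card_mono finite_lessThan)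
    hence "real (card S) / real n \<le> 1" using np by simp
    hence "real (card S) / real n * r \<le> r" using r0 mult_right_mono[of "real (card S) / real n" 1 r] by simp
    thus ?thesis by linarith
  qed
  finally show ?thesis unfolding r_def by simp
qed

theorem corollary2:
  fixes n :: nat and w :: "nat \<Rightarrow> real"
  assumes "n \<ge> 1"
    and "owa_weights n w"
    and "prop_P n (owa n w)"
  shows "prop_PF n (owa n w) \<and> prop_UFS n (owa n w)"
proof -
  have u: "\<forall>j<n. w j = 1 / real n" by (rule weights_uniform[OF assms(1,3)])
  have PF: "prop_PF n (owa n w)"
    unfolding prop_PF_def
  proof (intro ballI allI impI)
    fix x S i assume x: "x \<in> profiles n {0..1}" and S: "S \<subseteq> {..<n} \<and> S \<noteq> {}" and i: "i \<in> S"
    have len: "length x = n" and xs: "set x \<subseteq> {0..1}" using x by (auto simp: profiles_def)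
    show "\<bar>x ! i - owa n w x\<bar> \<le> 1 - real (card S) / real n + range_of x S"
    proof -
      have S1: "S \<subseteq> {..<n}" and S2: "S \<noteq> {}" using S by auto
      have "owa n w x = (\<Sum>j<n. x ! j) / real n" by (rule owa_mean[OF u len])
      thus ?thesis using mean_PF[OF assms(1) len xs S1 S2 i] by simp
    qed
  qed
  have UFS: "prop_UFS n (owa n w)"
    unfolding prop_UFS_def
  proof (intro ballI allI impI)
    fix x S i assume x: "x \<in> profiles n {0..1}"
      and S: "S \<subseteq> {..<n} \<and> S \<noteq> {} \<and> (\<forall>j\<in>S. \<forall>k\<in>S. x ! j = x ! k)" and i: "i \<in> S"
    have eq: "\<forall>j\<in>S. x ! j = x ! i" using S i by blast
    have "(!) x ` S = {x ! i}"
    proof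
      show "(!) x ` S \<subseteq> {x ! i}" using eq by blast
      show "{x ! i} \<subseteq> (!) x ` S" using i by blast
    qed
    hence r: "range_of x S = 0" by (simp add: range_of_def)
    show "\<bar>x ! i - owa n w x\<bar> \<le> 1 - real (card S) / real n"
    proof -
      have "S \<subseteq> {..<n} \<and> S \<noteq> {}" using S by blast
      hence "\<bar>x ! i - owa n w x\<bar> \<le> 1 - real (card S) / real n + range_of x S"
        using PF x i unfolding prop_PF_def by blast
      thus ?thesis using r by simp
    qed
  qed
  show ?thesis using PF UFS by blast
qed

end
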